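(* Let $P=(O,D,T)$ be an ODT triple and let $\theta$ be a number (in the paper's use, the $k$-th largest value of $\mathrm{cnt}$ among the level-$\ell$ triples generated so far). If $$P.\mathrm{cnt}+\max\{|P.D|\cdot|P.T|,\ |P.O|\cdot|P.T|,\ |P.O|\cdot|P.D|\}\le\theta,$$ then every minimal generalization $\mathrm{CandP}$ of $P$ satisfies $\mathrm{CandP}.\mathrm{cnt}\le\theta$; hence no minimal generalization of $P$ can enter the set of top-$k$ level-$\ell$ ODT triples (ranked by $\mathrm{cnt}$).
   Context: Let $V$ be a finite set of atomic regions, with an undirected neighborhood graph $G=(V,E)$, and let $S=\{1,\dots,M\}$ be the linearly ordered set of atomic timeslots. A region is a nonempty subset $R\subseteq V$ whose induced subgraph in $G$ is connected; a timeslot is a nonempty set of consecutive atomic timeslots. An ODT triple is $P=(O,D,T)$ with $O,D$ regions, $O\cap D=\emptyset$, and $T$ a timeslot; we write $P.O=O$, $P.D=D$, $P.T=T$. Its level is $|O|+|D|+|T|$. A fixed set $\mathcal{A}$ of atomic triples $(o,d,t)\in V\times V\times S$ with $o\ne d$ is given (the atomic patterns). For an ODT triple $P$, $P.\mathrm{cnt}$ denotes the number of atomic triples $(o,d,t)\in O\times D\times T$ that belong to $\mathcal{A}$. A region $R_1$ is a minimal generalization of a region $R_2$ if $R_2\subset R_1$ and $R_1\setminus R_2$ consists of a single atomic region; a timeslot $T_1$ is a minimal generalization of $T_2$ if $T_2\subset T_1$ and $T_1\setminus T_2$ is a single atomic timeslot. An ODT triple $P_1$ is a minimal generalization of $P_2$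 if two of its three components equal those of $P_2$ and the remaining component of $P_1$ is a minimal generalization of the corresponding component of $P_2$. *)

theory Defs
  imports Complex_Main
begin

definition region :: "'v set \<Rightarrow> ('v \<times> 'v) set \<Rightarrow> 'v set \<Rightarrow> bool" where
  "region V E R \<longleftrightarrow> R \<noteq> {} \<and> R \<subseteq> V \<and>
     (\<forall>x\<in>R. \<forall>y\<in>R. (x, y) \<in> (E \<inter> (R \<times> R))\<^sup>*)"

definition timeslot :: "nat \<Rightarrow> nat set \<Rightarrow> bool" where
  "timeslot M T \<longleftrightarrow> T \<noteq> {} \<and> T \<subseteq> {1..M} \<and> (\<exists>a b. T = {a..b})"

type_synonym 'v odt = "'v set \<times> 'v set \<times> nat set"

definition odt_triple :: "'v set \<Rightarrow> ('v \<times> 'v) set \<Rightarrow> nat \<Rightarrow> 'v odt \<Rightarrow> bool" where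
  "odt_triple V E M P \<longleftrightarrow> (case P of (Or, De, T) \<Rightarrow>
     region V E Or \<and> region V E De \<and> Or \<inter> De = {} \<and> timeslot M T)"

definition odtO :: "'v odt \<Rightarrow> 'v set" where "odtO P = fst P"
definition odtD :: "'v odt \<Rightarrow> 'v set" where "odtD P = fst (snd P)"
definition odtT :: "'v odt \<Rightarrow> nat set" where "odtT P = snd (snd P)"

definition cnt :: "('v \<times> 'v \<times> nat) set \<Rightarrow> 'v odt \<Rightarrow> nat" where
  "cnt A P = card {(x, d, t) \<in> A. x \<in> odtO P \<and> d \<in> odtD P \<and> t \<in> odtT P}"

definition min_gen_set :: "'a set \<Rightarrow> 'a set \<Rightarrow> bool" where
  "min_gen_set X1 X2 \<longleftrightarrow> X2 \<subset> X1 \<and> card (X1 - X2) = 1"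

definition min_gen :: "'v set \<Rightarrow> ('v \<times> 'v) set \<Rightarrow> nat \<Rightarrow> 'v odt \<Rightarrow> 'v odt \<Rightarrow> bool" where
  "min_gen V E M P1 P2 \<longleftrightarrow> odt_triple V E M P1 \<and>
     ((min_gen_set (odtO P1) (odtO P2) \<and> odtD P1 = odtD P2 \<and> odtT P1 = odtT P2) \<or>
      (odtO P1 = odtO P2 \<and> min_gen_set (odtD P1) (odtD P2) \<and> odtT P1 = odtT P2) \<or>
      (odtO P1 = odtO P2 \<and> odtD P1 = odtD P2 \<and> min_gen_set (odtT P1) (odtT P2)))"

end

theory Submission
  imports Defs
begin

lemma gen_bound:
  fixes A :: "('v \<times> 'v \<times> nat) set"
  assumes fA: "finite A" and fX: "finite X" and fY: "finite Y" and fZ: "finite Z"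
    and sub: "S1 \<subseteq> S2 \<union> (X \<times> Y \<times> Z)" and s2: "S2 \<subseteq> A"
  shows "card S1 \<le> card S2 + card X * card Y * card Z"
proof -
  have "finite (S2 \<union> (X \<times> Y \<times> Z))" using fA s2 fX fY fZ finite_subset by blast
  then have "card S1 \<le> card (S2 \<union> (X \<times> Y \<times> Z))" using sub card_mono by blast
  also have "\<dots> \<le> card S2 + card (X \<times> Y \<times> Z)" by (rule card_Un_le)
  finally show ?thesis by (simp add: card_cartesian_product mult.assoc)
qed

lemma card1: "card X = 1 \<Longrightarrow> \<exists>a. X = {a}" by (simp add: card_1_singleton_iff)

theorem lemma2:
  fixes V :: "'v set" and E :: "('v \<times> 'v) set" and M :: nat
    and A :: "('v \<times> 'v \<times> nat) set" and P :: "'v odt" and \<theta> :: real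
  assumes "finite V"
    and "E \<subseteq> V \<times> V" and "sym E"
    and "A \<subseteq> V \<times> V \<times> {1..M}" and "\<forall>(x, d, t)\<in>A. x \<noteq> d"
    and "odt_triple V E M P"
    and "real (cnt A P) + real (max (card (odtD P) * card (odtT P))
           (max (card (odtO P) * card (odtT P)) (card (odtO P) * card (odtD P)))) \<le> \<theta>"
  shows "\<forall>CandP. min_gen V E M CandP P \<longrightarrow> real (cnt A CandP) \<le> \<theta>"
proof (intro allI impI)
  fix C assume mg: "min_gen V E M C P"
  have fA: "finite A" using assms(1,4) finite_subset by (metis finite_SigmaI finite_atLeastAtMost)
  obtain O1 D1 T1 where P: "P = (O1, D1, T1)" by (cases P) auto
  have fO: "finite O1" and fD: "finite D1" and fT: "finite T1"
    using assms(1,6) unfolding P odt_triple_def region_def timeslot_def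
    by (auto intro: finite_subset)
  let ?S2 = "{(x, d, t) \<in> A. x \<in> odtO P \<and> d \<in> odtD P \<and> t \<in> odtT P}"
  let ?S1 = "{(x, d, t) \<in> A. x \<in> odtO C \<and> d \<in> odtD C \<and> t \<in> odtT C}"
  have s2: "?S2 \<subseteq> A" by auto
  have "real (cnt A C) \<le> real (cnt A P) + real (max (card (odtD P) * card (odtT P))
           (max (card (odtO P) * card (odtT P)) (card (odtO P) * card (odtD P))))"
  proof -
    have "cnt A C \<le> cnt A P + max (card (odtD P) * card (odtT P))
           (max (card (odtO P) * card (odtT P)) (card (odtO P) * card (odtD P)))"
      using mg unfolding min_gen_def min_gen_set_def
    proof (elim conjE disjE)
      assume h: "odtO P \<subset> odtO C" "card (odtO C - odtO P) = 1" "odtD C = odtD P" "odtT C = odtT P"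
      then obtain a where a: "odtO C - odtO P = {a}" using card1 by blast
      have "?S1 \<subseteq> ?S2 \<union> ({a} \<times> odtD P \<times> odtT P)" using h a by auto
      from gen_bound[OF fA _ _ _ this s2] fD fT
      have "card ?S1 \<le> card ?S2 + card (odtD P) * card (odtT P)" unfolding P odtD_def odtT_def by simp
      then show ?thesis unfolding cnt_def by linarith
    next
      assume h: "odtO C = odtO P" "odtD P \<subset> odtD C" "card (odtD C - odtD P) = 1" "odtT C = odtT P"
      then obtain a where a: "odtD C - odtD P = {a}" using card1 by blast
      have "?S1 \<subseteq> ?S2 \<union> (odtO P \<times> {a} \<times> odtT P)" using h a by auto
      from gen_bound[OF fA _ _ _ this s2] fO fT
      have "card ?S1 \<le> card ?S2 + card (odtO P) * card (odtT P)" unfolding P odtO_def odtT_def by simp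
      then show ?thesis unfolding cnt_def by linarith
    next
      assume h: "odtO C = odtO P" "odtD C = odtD P" "odtT P \<subset> odtT C" "card (odtT C - odtT P) = 1"
      then obtain a where a: "odtT C - odtT P = {a}" using card1 by blast
      have "?S1 \<subseteq> ?S2 \<union> (odtO P \<times> odtD P \<times> {a})" using h a by auto
      from gen_bound[OF fA _ _ _ this s2] fO fD
      have "card ?S1 \<le> card ?S2 + card (odtO P) * card (odtD P)" unfolding P odtO_def odtD_def by simp
      then show ?thesis unfolding cnt_def by linarith
    qed
    then show ?thesis by linarith
  qed
  then show "real (cnt A C) \<le> \<theta>" using assms(7) by linarith
qed

end
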